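(* Let $\mathcal H$ be a well-structured preconditioner set. The map $X\mapsto\operatorname{Tr}[P_{\mathcal H}(X)]$ is concave on $\mathcal S^d_{++}$.
   Context: $\mathcal S^d_+$ (resp. $\mathcal S^d_{++}$) denotes the set of real symmetric positive semidefinite (resp. positive definite) $d\times d$ matrices; $\langle A,B\rangle=\operatorname{Tr}(A^\top B)$. A set $\mathcal H\subseteq\mathcal S_+^d$ is a well-structured preconditioner set if $\mathcal H=\mathcal S_+^d\cap\mathcal K$ for some set $\mathcal K$ of real $d\times d$ matrices that is closed under scalar multiplication, matrix addition and matrix multiplication and contains the identity $I_d$. For $M\in\mathcal S^d_{++}$, $P_{\mathcal H}(M):=\arg\min_{H\in\mathcal H\cap\mathcal S^d_{++}}\langle M,H^{-1}\rangle+\operatorname{Tr}(H)$ (the minimizer exists and is unique). *)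

theory Defs
  imports "HOL-Analysis.Analysis"
begin

definition psd_mat :: "real^'n^'n \<Rightarrow> bool" where
  "psd_mat A \<longleftrightarrow> transpose A = A \<and> (\<forall>x. 0 \<le> x \<bullet> (A *v x))"

definition pd_mat :: "real^'n^'n \<Rightarrow> bool" where
  "pd_mat A \<longleftrightarrow> transpose A = A \<and> (\<forall>x. x \<noteq> 0 \<longrightarrow> 0 < x \<bullet> (A *v x))"

definition frob_inner :: "real^'n^'n \<Rightarrow> real^'n^'n \<Rightarrow> real" where
  "frob_inner A B = trace (transpose A ** B)"

definition well_structured :: "(real^'n^'n) set \<Rightarrow> bool" where
  "well_structured H \<longleftrightarrow>
     (\<exists>K :: (real^'n^'n) set.
        (\<forall>c A. A \<in> K \<longrightarrow> c *\<^sub>R A \<in> K) \<and>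
        (\<forall>A B. A \<in> K \<longrightarrow> B \<in> K \<longrightarrow> A + B \<in> K) \<and>
        (\<forall>A B. A \<in> K \<longrightarrow> B \<in> K \<longrightarrow> A ** B \<in> K) \<and>
        mat 1 \<in> K \<and>
        H = {A. psd_mat A} \<inter> K)"

definition precond :: "(real^'n^'n) set \<Rightarrow> real^'n^'n \<Rightarrow> real^'n^'n" where
  "precond H M = (THE P. P \<in> H \<and> pd_mat P \<and>
      (\<forall>Q. Q \<in> H \<and> pd_mat Q \<longrightarrow>
         frob_inner M (matrix_inv P) + trace P \<le> frob_inner M (matrix_inv Q) + trace Q))"

end

theory Submission
  imports Defs
begin


definition outer :: "real^'n \<Rightarrow> real^'n^'n" where
  "outer u = (\<chi> i j. u$i * u$j)"

lemma frob_sum: "frob_inner (A::real^'n^'n) B = (\<Sum>i\<in>UNIV. \<Sum>j\<in>UNIV. A$i$j * B$i$j)"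
proof -
  have "frob_inner A B = (\<Sum>j\<in>UNIV. \<Sum>i\<in>UNIV. A$i$j * B$i$j)"
    unfolding frob_inner_def trace_def matrix_matrix_mult_def transpose_def by simp
  also have "\<dots> = (\<Sum>i\<in>UNIV. \<Sum>j\<in>UNIV. A$i$j * B$i$j)" by (rule sum.swap)
  finally show ?thesis .
qed

lemma quad_sum: "x \<bullet> ((A::real^'n^'n) *v x) = (\<Sum>i\<in>UNIV. \<Sum>j\<in>UNIV. x$i * A$i$j * x$j)"
  unfolding inner_vec_def matrix_vector_mult_def
  by (simp add: sum_distrib_left mult.assoc)

lemma frob_add2: "frob_inner A (B + C) = frob_inner A B + frob_inner A (C::real^'n^'n)"
  by (simp add: frob_sum algebra_simps sum.distrib)
lemma frob_diff2: "frob_inner A (B - C) = frob_inner A B - frob_inner A (C::real^'n^'n)"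
  by (simp add: frob_sum algebra_simps sum_subtractf)
lemma frob_scale2: "frob_inner A (c *\<^sub>R B) = c * frob_inner A (B::real^'n^'n)"
  by (simp add: frob_sum algebra_simps sum_distrib_left)
lemma frob_add1: "frob_inner (B + C) A = frob_inner B A + frob_inner (C::real^'n^'n) A"
  by (simp add: frob_sum algebra_simps sum.distrib)
lemma frob_scale1: "frob_inner (c *\<^sub>R B) A = c * frob_inner (B::real^'n^'n) A"
  by (simp add: frob_sum algebra_simps sum_distrib_left)
lemma frob_outer: "frob_inner A (outer u) = u \<bullet> ((A::real^'n^'n) *v u)"
  by (simp add: frob_sum quad_sum outer_def algebra_simps)
lemma quad_outer: "x \<bullet> (outer u *v x) = (u \<bullet> x)^2"
proof -
  have "x \<bullet> (outer u *v x) = (\<Sum>i\<in>UNIV. \<Sum>j\<in>UNIV. x$i * (u$i * u$j) * x$j)"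
    by (simp only: quad_sum) (simp add: outer_def)
  also have "\<dots> = (u \<bullet> x)^2"
    by (simp add: inner_vec_def power2_eq_square sum_product algebra_simps)
  finally show ?thesis .
qed

lemma trace_scale: "trace (c *\<^sub>R (A::real^'n^'n)) = c * trace A"
  by (simp add: trace_def sum_distrib_left)

lemma sym_inner: assumes "transpose B = (B::real^'n^'n)"
  shows "a \<bullet> (B *v b) = b \<bullet> (B *v a)"
proof -
  have "a \<bullet> (B *v b) = (a v* B) \<bullet> b" by (simp add: dot_lmul_matrix)
  also have "a v* B = transpose B *v a" by simp
  finally show ?thesis using assms by (simp add: inner_commute)
qed

lemma quad_add: "(a + b) \<bullet> ((B::real^'n^'n) *v (a + b)) = a \<bullet> (B *v a) + a \<bullet> (B *v b) + b \<bullet> (B *v a) + b \<bullet> (B *v b)"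
  by (simp add: matrix_vector_right_distrib inner_add_left inner_add_right)
lemma quad_diff: "(a - b) \<bullet> ((B::real^'n^'n) *v (a - b)) = a \<bullet> (B *v a) - a \<bullet> (B *v b) - b \<bullet> (B *v a) + b \<bullet> (B *v b)"
  by (simp add: matrix_vector_mult_diff_distrib inner_diff_left inner_diff_right)
lemma quad_scale: "(t *\<^sub>R a) \<bullet> ((B::real^'n^'n) *v (t *\<^sub>R a)) = t^2 * (a \<bullet> (B *v a))"
  by (simp add: matrix_vector_mult_scaleR power2_eq_square)
lemma axis_bil: "axis i 1 \<bullet> ((B::real^'n^'n) *v axis j 1) = B$i$j"
  by (simp add: matrix_vector_mult_basis inner_axis' column_def)

lemma psd_diag: "psd_mat B \<Longrightarrow> 0 \<le> B$k$k"
  using axis_bil[of k B k] unfolding psd_mat_def by metis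

lemma psd_offdiag_zero:
  assumes "psd_mat B" "B$k$k = 0" shows "B$k$j = 0"
proof (rule ccontr)
  assume ne: "B$k$j \<noteq> 0"
  have sym: "transpose B = B" using assms unfolding psd_mat_def by auto
  define t where "t = - (B$j$j + 1) / (2 * B$k$j)"
  let ?x = "t *\<^sub>R axis k 1 + axis j (1::real)"
  have "?x \<bullet> (B *v ?x) = t^2 * B$k$k + 2 * t * B$k$j + B$j$j"
    unfolding quad_add quad_scale
    using sym_inner[OF sym, of "axis k 1" "axis j 1"]
    by (simp add: matrix_vector_mult_scaleR axis_bil algebra_simps)
  also have "\<dots> = -1" using ne assms(2) by (simp add: t_def field_simps)
  finally show False using assms(1) unfolding psd_mat_def by (metis neg_0_le_iff_le not_one_le_zero)
qed



lemma pd_psd: "pd_mat A \<Longrightarrow> psd_mat A"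
  unfolding pd_mat_def psd_mat_def by (metis inner_zero_left order_refl less_imp_le)

lemma transpose_entry: "transpose A $ i $ j = A $ j $ i"
  by (simp add: transpose_def)

lemma sym_entry: "transpose A = A \<Longrightarrow> A $ i $ j = A $ j $ i"
  by (metis transpose_entry)

lemma outer_entry: "outer u $ i $ j = u$i * u$j"
  by (simp add: outer_def)

lemma scaleR_mv: "(c *\<^sub>R (M::real^'n^'n)) *v x = c *\<^sub>R (M *v x)"
  by (simp add: matrix_vector_mult_def vec_eq_iff sum_distrib_left algebra_simps)

lemma schur_step:
  fixes B :: "real^'n^'n"
  assumes B: "psd_mat B" and d: "B$k$k > 0"
  defines "b \<equiv> column k B"
  shows "psd_mat (B - (1 / B$k$k) *\<^sub>R outer b)"
proof -
  let ?d = "B$k$k"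
  have sym: "transpose B = B" using B unfolding psd_mat_def by auto
  have symB': "transpose (B - (1 / ?d) *\<^sub>R outer b) = B - (1 / ?d) *\<^sub>R outer b"
    by (simp add: vec_eq_iff transpose_entry outer_entry sym_entry[OF sym] mult.commute)
  have Bk: "B *v axis k 1 = b" unfolding b_def by (rule matrix_vector_mult_basis)
  have "0 \<le> x \<bullet> ((B - (1 / ?d) *\<^sub>R outer b) *v x)" for x
  proof -
    define c where "c = (b \<bullet> x) / ?d"
    let ?e = "axis k (1::real)"
    have xb: "x \<bullet> (B *v ?e) = b \<bullet> x" using Bk by (simp add: inner_commute)
    have eB: "?e \<bullet> (B *v x) = b \<bullet> x" using sym_inner[OF sym, of ?e x] xb by simp
    have ee: "?e \<bullet> (B *v ?e) = ?d" by (rule axis_bil)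
    have "0 \<le> (x - c *\<^sub>R ?e) \<bullet> (B *v (x - c *\<^sub>R ?e))" using B unfolding psd_mat_def by auto
    also have "\<dots> = x \<bullet> (B *v x) - c * (b \<bullet> x) - c * (b \<bullet> x) + c^2 * ?d"
      unfolding quad_diff quad_scale
      by (simp add: matrix_vector_mult_scaleR xb eB ee)
    also have "\<dots> = x \<bullet> (B *v x) - (1 / ?d) * (b \<bullet> x)^2"
      using d by (simp add: c_def field_simps power2_eq_square)
    also have "\<dots> = x \<bullet> ((B - (1 / ?d) *\<^sub>R outer b) *v x)"
      by (simp add: matrix_vector_mult_diff_rdistrib scaleR_mv inner_diff_right quad_outer)
    finally show ?thesis .
  qed
  then show ?thesis using symB' unfolding psd_mat_def by auto
qed

lemma psd_frob_aux:
  fixes A :: "real^'n^'n"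
  assumes A: "psd_mat A" and S: "finite S"
  shows "\<forall>B. psd_mat B \<and> (\<forall>i j. i \<notin> S \<or> j \<notin> S \<longrightarrow> B$i$j = 0) \<longrightarrow>
     0 \<le> frob_inner A B \<and> (pd_mat A \<and> frob_inner A B = 0 \<longrightarrow> B = 0)"
  using S
proof (induction S rule: finite_induct)
  case empty
  show ?case
  proof (intro allI impI)
    fix B :: "real^'n^'n"
    assume "psd_mat B \<and> (\<forall>i j. i \<notin> {} \<or> j \<notin> {} \<longrightarrow> B$i$j = 0)"
    then have "B = 0" by (simp add: vec_eq_iff)
    then show "0 \<le> frob_inner A B \<and> (pd_mat A \<and> frob_inner A B = 0 \<longrightarrow> B = 0)"
      by (simp add: frob_sum)
  qed
next
  case (insert k S)
  show ?case
  proof (intro allI impI)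
    fix B :: "real^'n^'n"
    assume H: "psd_mat B \<and> (\<forall>i j. i \<notin> insert k S \<or> j \<notin> insert k S \<longrightarrow> B$i$j = 0)"
    then have B: "psd_mat B" and supp: "\<And>i j. i \<notin> insert k S \<or> j \<notin> insert k S \<Longrightarrow> B$i$j = 0"
      by auto
    have sym: "transpose B = B" using B unfolding psd_mat_def by auto
    show "0 \<le> frob_inner A B \<and> (pd_mat A \<and> frob_inner A B = 0 \<longrightarrow> B = 0)"
    proof (cases "B$k$k = 0")
      case True
      have r: "B$k$j = 0" for j using psd_offdiag_zero[OF B True] .
      have "\<forall>i j. i \<notin> S \<or> j \<notin> S \<longrightarrow> B$i$j = 0"
      proof (intro allI impI)
        fix i j assume "i \<notin> S \<or> j \<notin> S"
        then show "B$i$j = 0"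
          using supp r sym_entry[OF sym, of i j] by (cases "i = k"; cases "j = k") auto
      qed
      then show ?thesis using insert.IH B by blast
    next
      case False
      define d where "d = B$k$k"
      have dpos: "d > 0" using psd_diag[OF B, of k] False d_def by linarith
      define b where "b = column k B"
      define B' where "B' = B - (1 / d) *\<^sub>R outer b"
      have B'psd: "psd_mat B'" unfolding B'_def d_def b_def
        using schur_step[OF B] dpos d_def by simp
      have bent: "b$i = B$i$k" for i by (simp add: b_def column_def)
      have "\<forall>i j. i \<notin> S \<or> j \<notin> S \<longrightarrow> B'$i$j = 0"
      proof (intro allI impI)
        fix i j assume ij: "i \<notin> S \<or> j \<notin> S"
        have e: "B'$i$j = B$i$j - (1/d) * (B$i$k * B$j$k)"
          by (simp add: B'_def outer_entry bent)
        show "B'$i$j = 0"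
        proof (cases "i = k")
          case True
          then show ?thesis using e dpos d_def sym_entry[OF sym, of k j] by simp
        next
          case ik: False
          show ?thesis
          proof (cases "j = k")
            case True
            then show ?thesis using e dpos d_def by simp
          next
            case False
            then show ?thesis using e ij ik supp by auto
          qed
        qed
      qed
      then have IH: "0 \<le> frob_inner A B' \<and> (pd_mat A \<and> frob_inner A B' = 0 \<longrightarrow> B' = 0)"
        using insert.IH B'psd by blast
      have Bdec: "B = B' + (1/d) *\<^sub>R outer b" by (simp add: B'_def)
      have fB: "frob_inner A B = frob_inner A B' + (1/d) * (b \<bullet> (A *v b))"
        by (subst Bdec) (simp add: frob_add2 frob_scale2 frob_outer)
      have bA: "0 \<le> b \<bullet> (A *v b)" using A unfolding psd_mat_def by auto
      have "0 \<le> frob_inner A B" using fB IH bA dpos by simp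
      moreover have "pd_mat A \<and> frob_inner A B = 0 \<longrightarrow> B = 0"
      proof
        assume pA: "pd_mat A \<and> frob_inner A B = 0"
        then have "b \<bullet> (A *v b) = 0" using fB IH bA dpos
          by (smt (verit, best) divide_pos_pos mult_pos_pos zero_less_one)
        then have "b = 0" using pA unfolding pd_mat_def by force
        then have "d = 0" using bent[of k] d_def by simp
        then show "B = 0" using dpos by simp
      qed
      ultimately show ?thesis by blast
    qed
  qed
qed

lemma psd_frob: "psd_mat A \<Longrightarrow> psd_mat B \<Longrightarrow> 0 \<le> frob_inner A (B::real^'n^'n)"
  using psd_frob_aux[of A "UNIV"] by auto

lemma pd_frob_zero: "pd_mat A \<Longrightarrow> psd_mat B \<Longrightarrow> frob_inner A (B::real^'n^'n) = 0 \<Longrightarrow> B = 0"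
  using psd_frob_aux[of A "UNIV"] pd_psd by auto



lemma mm_diff_l: "(A::real^'n^'n) ** (B - C) = A ** B - A ** C"
  by (simp add: vec_eq_iff matrix_matrix_mult_def sum_subtractf algebra_simps)
lemma mm_diff_r: "((A::real^'n^'n) - B) ** C = A ** C - B ** C"
  by (simp add: vec_eq_iff matrix_matrix_mult_def sum_subtractf algebra_simps)
lemma mm_add_r: "((A::real^'n^'n) + B) ** C = A ** C + B ** C"
  by (simp add: vec_eq_iff matrix_matrix_mult_def sum.distrib algebra_simps)
lemma mm_scale_l: "(c *\<^sub>R (A::real^'n^'n)) ** B = c *\<^sub>R (A ** B)"
  by (simp add: scalar_matrix_assoc)
lemma mm_scale_r: "(A::real^'n^'n) ** (c *\<^sub>R B) = c *\<^sub>R (A ** B)"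
  by (simp add: matrix_scalar_ac scalar_matrix_assoc)

lemma pd_invertible: assumes "pd_mat (P::real^'n^'n)" shows "invertible P"
proof -
  have "inj ((*v) P)"
  proof (rule injI)
    fix x y assume "P *v x = P *v y"
    then have "P *v (x - y) = 0" by (simp add: matrix_vector_mult_diff_distrib)
    then have "(x - y) \<bullet> (P *v (x - y)) = 0" by simp
    then show "x = y" using assms unfolding pd_mat_def by (metis eq_iff_diff_eq_0 less_irrefl)
  qed
  then show ?thesis using matrix_left_invertible_injective invertible_left_inverse by blast
qed

lemma inv_props: assumes "invertible (P::real^'n^'n)"
  shows "P ** matrix_inv P = mat 1" "matrix_inv P ** P = mat 1"
proof -
  have "\<exists>A'. P ** A' = mat 1 \<and> A' ** P = mat 1" using assms unfolding invertible_def by blast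
  then have "P ** matrix_inv P = mat 1 \<and> matrix_inv P ** P = mat 1"
    unfolding matrix_inv_def by (rule someI_ex)
  then show "P ** matrix_inv P = mat 1" "matrix_inv P ** P = mat 1" by auto
qed

lemma pd_inv:
  assumes P: "pd_mat (P::real^'n^'n)"
  shows "P ** matrix_inv P = mat 1" "matrix_inv P ** P = mat 1"
    "transpose (matrix_inv P) = matrix_inv P" "pd_mat (matrix_inv P)"
proof -
  let ?Pi = "matrix_inv P"
  have sym: "transpose P = P" using P unfolding pd_mat_def by auto
  show r: "P ** ?Pi = mat 1" and l: "?Pi ** P = mat 1" using inv_props pd_invertible[OF P] by auto
  have "transpose ?Pi ** P = mat 1"
    by (metis matrix_transpose_mul r sym transpose_mat)
  then have "transpose ?Pi = ?Pi"
    by (metis matrix_mul_assoc matrix_mul_lid matrix_mul_rid r)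
  moreover have "0 < x \<bullet> (?Pi *v x)" if "x \<noteq> 0" for x
  proof -
    have xe: "P *v (?Pi *v x) = x" by (simp add: matrix_vector_mul_assoc r)
    have nz: "?Pi *v x \<noteq> 0" using xe that by auto
    have "x \<bullet> (?Pi *v x) = (?Pi *v x) \<bullet> (P *v (?Pi *v x))" using xe by (simp add: inner_commute)
    also have "\<dots> > 0" using P nz unfolding pd_mat_def by auto
    finally show ?thesis .
  qed
  ultimately show "transpose ?Pi = ?Pi" "pd_mat ?Pi" unfolding pd_mat_def by auto
qed

lemma sandwich_psd:
  assumes R: "transpose R = (R::real^'n^'n)" and Q: "psd_mat Q"
  shows "psd_mat (R ** Q ** R)"
proof -
  have sQ: "transpose Q = Q" using Q unfolding psd_mat_def by auto
  have "transpose (R ** Q ** R) = R ** Q ** R"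
    by (simp add: matrix_transpose_mul R sQ matrix_mul_assoc)
  moreover have "0 \<le> x \<bullet> ((R ** Q ** R) *v x)" for x
  proof -
    have "x \<bullet> ((R ** Q ** R) *v x) = x \<bullet> (R *v (Q *v (R *v x)))"
      by (metis matrix_vector_mul_assoc)
    also have "\<dots> = (Q *v (R *v x)) \<bullet> (R *v x)"
      using sym_inner[OF R, of x "Q *v (R *v x)"] by (simp add: inner_commute)
    also have "\<dots> \<ge> 0" using Q unfolding psd_mat_def by (simp add: inner_commute)
    finally show ?thesis .
  qed
  ultimately show ?thesis unfolding psd_mat_def by auto
qed

lemma W_identity:
  assumes Q: "pd_mat (Q::real^'n^'n)"
  shows "(matrix_inv Q - W) ** Q ** (matrix_inv Q - W) = matrix_inv Q - (2 *\<^sub>R W - W ** Q ** W)"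
proof -
  let ?Qi = "matrix_inv Q"
  have l: "?Qi ** Q = mat 1" and r: "Q ** ?Qi = mat 1" using pd_inv[OF Q] by auto
  have "(?Qi - W) ** Q = mat 1 - W ** Q" by (simp add: mm_diff_r l)
  then have "(?Qi - W) ** Q ** (?Qi - W) = (mat 1 - W ** Q) ** (?Qi - W)" by simp
  also have "\<dots> = ?Qi - W - (W ** (Q ** ?Qi) - W ** Q ** W)"
    by (simp add: mm_diff_r mm_diff_l matrix_mul_assoc)
  also have "\<dots> = ?Qi - (2 *\<^sub>R W - W ** Q ** W)"
    by (simp add: r scaleR_2 algebra_simps)
  finally show ?thesis .
qed

lemma W_gap:
  assumes Q: "pd_mat (Q::real^'n^'n)"
  shows "frob_inner X (2 *\<^sub>R W - W ** Q ** W) =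
     frob_inner X (matrix_inv Q) - frob_inner X ((matrix_inv Q - W) ** Q ** (matrix_inv Q - W))"
  unfolding W_identity[OF Q] frob_diff2 by simp

lemma W_bound:
  assumes Q: "pd_mat (Q::real^'n^'n)" and X: "psd_mat X" and W: "transpose W = W"
  shows "frob_inner X (2 *\<^sub>R W - W ** Q ** W) \<le> frob_inner X (matrix_inv Q)"
proof -
  have "transpose (matrix_inv Q - W) = matrix_inv Q - W"
    using pd_inv(3)[OF Q] W by (simp add: vec_eq_iff transpose_entry)
  then have "psd_mat ((matrix_inv Q - W) ** Q ** (matrix_inv Q - W))"
    using sandwich_psd pd_psd[OF Q] by blast
  then show ?thesis using W_gap[OF Q, of X W] psd_frob[OF X] by smt
qed

lemma W_exact:
  assumes Q: "pd_mat (Q::real^'n^'n)"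
  shows "2 *\<^sub>R matrix_inv Q - matrix_inv Q ** Q ** matrix_inv Q = matrix_inv Q"
  using pd_inv[OF Q] by (simp add: scaleR_2 matrix_mul_assoc[symmetric])

lemma outer_sandwich: "outer u ** (Q::real^'n^'n) ** outer u = (u \<bullet> (Q *v u)) *\<^sub>R outer u"
proof -
  have "(outer u ** Q ** outer u) $ i $ j = (u \<bullet> (Q *v u)) * (u$i * u$j)" for i j
  proof -
    have "(outer u ** Q ** outer u) $ i $ j = (\<Sum>l\<in>UNIV. (\<Sum>m\<in>UNIV. u$i * u$m * Q$m$l) * (u$l * u$j))"
      by (simp add: matrix_matrix_mult_def outer_entry)
    also have "\<dots> = (u$i * u$j) * (\<Sum>l\<in>UNIV. \<Sum>m\<in>UNIV. u$m * Q$m$l * u$l)"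
      by (simp add: sum_distrib_left sum_distrib_right algebra_simps)
    also have "(\<Sum>l\<in>UNIV. \<Sum>m\<in>UNIV. u$m * Q$m$l * u$l) = (\<Sum>m\<in>UNIV. \<Sum>l\<in>UNIV. u$m * Q$m$l * u$l)"
      by (rule sum.swap)
    also have "\<dots> = u \<bullet> (Q *v u)" by (simp add: quad_sum)
    finally show ?thesis by simp
  qed
  then show ?thesis by (simp add: vec_eq_iff outer_entry)
qed

lemma quad_lower:
  assumes Q: "pd_mat (Q::real^'n^'n)" and X: "psd_mat X" and u: "u \<noteq> 0"
  shows "(u \<bullet> (X *v u)) / (u \<bullet> (Q *v u)) \<le> frob_inner X (matrix_inv Q)"
proof -
  define q where "q = u \<bullet> (Q *v u)"
  have qpos: "q > 0" using Q u unfolding pd_mat_def q_def by auto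
  define W where "W = (1/q) *\<^sub>R outer u"
  have sW: "transpose W = W" by (simp add: W_def vec_eq_iff transpose_entry outer_entry mult.commute)
  have "W ** Q ** W = ((1/q) * (1/q) * q) *\<^sub>R outer u"
    unfolding W_def mm_scale_l mm_scale_r outer_sandwich q_def[symmetric]
    by simp
  also have "(1/q) * (1/q) * q = 1/q" using qpos by (simp add: field_simps)
  finally have WQW: "W ** Q ** W = W" by (simp add: W_def)
  then have "2 *\<^sub>R W - W ** Q ** W = W" by (simp add: scaleR_2)
  then have "frob_inner X (2 *\<^sub>R W - W ** Q ** W) = (u \<bullet> (X *v u)) / q"
    by (simp add: W_def frob_scale2 frob_outer)
  then show ?thesis using W_bound[OF Q X sW] q_def by simp
qed



definition fobj :: "real^'n^'n \<Rightarrow> real^'n^'n \<Rightarrow> real" where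
  "fobj X Q = frob_inner X (matrix_inv Q) + trace Q"

lemma psd_trace_nonneg: "psd_mat Q \<Longrightarrow> 0 \<le> trace (Q::real^'n^'n)"
  unfolding trace_def by (intro sum_nonneg) (simp add: psd_diag)

lemma fobj_nonneg: "psd_mat X \<Longrightarrow> pd_mat Q \<Longrightarrow> 0 \<le> fobj X Q"
  unfolding fobj_def using psd_frob[of X "matrix_inv Q"] pd_inv(4)[of Q] pd_psd psd_trace_nonneg
  by (metis add_nonneg_nonneg)

lemma diag_le_trace: "psd_mat Q \<Longrightarrow> Q$i$i \<le> trace (Q::real^'n^'n)"
  unfolding trace_def
  by (rule member_le_sum[of i UNIV "\<lambda>i. Q$i$i"]) (auto simp: psd_diag)

lemma psd_entry_bound:
  assumes Q: "psd_mat (Q::real^'n^'n)" shows "\<bar>Q$i$j\<bar> \<le> trace Q"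
proof -
  have sym: "transpose Q = Q" using Q unfolding psd_mat_def by auto
  let ?a = "axis i (1::real)" and ?b = "axis j (1::real)"
  have s: "Q$j$i = Q$i$j" using sym_entry[OF sym] by simp
  have "0 \<le> (?a + ?b) \<bullet> (Q *v (?a + ?b))" using Q unfolding psd_mat_def by auto
  then have 1: "0 \<le> Q$i$i + 2 * Q$i$j + Q$j$j" unfolding quad_add axis_bil s by simp
  have "0 \<le> (?a - ?b) \<bullet> (Q *v (?a - ?b))" using Q unfolding psd_mat_def by auto
  then have 2: "0 \<le> Q$i$i - 2 * Q$i$j + Q$j$j" unfolding quad_diff axis_bil s by simp
  have "Q$i$i \<le> trace Q" "Q$j$j \<le> trace Q" using diag_le_trace[OF Q] by auto
  then show ?thesis using 1 2 by linarith
qed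

lemma norm_entry_bound:
  assumes "\<And>i j. \<bar>(A::real^'n^'n)$i$j\<bar> \<le> c"
  shows "norm A \<le> real CARD('n) * (real CARD('n) * c)"
proof -
  have "norm A \<le> (\<Sum>i\<in>UNIV. \<bar>norm (A$i)\<bar>)"
    unfolding norm_vec_def by (simp add: L2_set_le_sum)
  also have "\<dots> \<le> (\<Sum>i\<in>(UNIV::'n set). real CARD('n) * c)"
  proof (rule sum_mono)
    fix i
    have "norm (A$i) \<le> (\<Sum>j\<in>UNIV. \<bar>A$i$j\<bar>)" by (rule norm_le_l1_cart)
    also have "\<dots> \<le> (\<Sum>j\<in>(UNIV::'n set). c)" by (rule sum_mono) (rule assms)
    finally show "\<bar>norm (A$i)\<bar> \<le> real CARD('n) * c" by simp
  qed
  finally show ?thesis by simp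
qed

lemma phi_tendsto:
  fixes S :: "nat \<Rightarrow> real^'n^'n"
  assumes "S \<longlonglongrightarrow> l"
  shows "(\<lambda>k. frob_inner X (2 *\<^sub>R W - W ** S k ** W) + trace (S k)) \<longlonglongrightarrow>
         frob_inner X (2 *\<^sub>R W - W ** l ** W) + trace l"
proof -
  have e: "\<And>Q i j. (W ** Q ** W)$i$j = (\<Sum>p\<in>UNIV. (\<Sum>m\<in>UNIV. W$i$m * Q$m$p) * W$p$j)"
    by (simp add: matrix_matrix_mult_def)
  have ent: "\<And>i j. (\<lambda>k. S k $ i $ j) \<longlonglongrightarrow> l $ i $ j"
    by (intro tendsto_vec_nth assms)
  show ?thesis
    unfolding frob_sum trace_def vector_minus_component vector_scaleR_component e
    by (intro tendsto_intros ent)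
qed

lemma quad_tendsto:
  fixes S :: "nat \<Rightarrow> real^'n^'n"
  assumes "S \<longlonglongrightarrow> l"
  shows "(\<lambda>k. x \<bullet> (S k *v x)) \<longlonglongrightarrow> x \<bullet> (l *v x)"
proof -
  have ent: "\<And>i j. (\<lambda>k. S k $ i $ j) \<longlonglongrightarrow> l $ i $ j"
    by (intro tendsto_vec_nth assms)
  show ?thesis unfolding quad_sum by (intro tendsto_intros ent)
qed

lemma ws_props:
  assumes "well_structured H"
  obtains K where "subspace K" "H = {A. psd_mat A} \<inter> K" "mat 1 \<in> K"
    "\<And>A B. A \<in> K \<Longrightarrow> B \<in> K \<Longrightarrow> A + B \<in> K" "\<And>c A. A \<in> K \<Longrightarrow> c *\<^sub>R A \<in> K"
proof -
  obtain K where K: "(\<forall>c A. A \<in> K \<longrightarrow> c *\<^sub>R A \<in> K)" "(\<forall>A B. A \<in> K \<longrightarrow> B \<in> K \<longrightarrow> A + B \<in> K)"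
     "mat 1 \<in> K" "H = {A. psd_mat A} \<inter> K"
    using assms unfolding well_structured_def by blast
  have "0 \<in> K" using K(1,3) by (metis scaleR_zero_left)
  then have "subspace K" unfolding subspace_def using K by auto
  then show ?thesis using that K by blast
qed

lemma pd_I: "pd_mat (mat 1 :: real^'n^'n)"
  unfolding pd_mat_def by auto

lemma existence:
  fixes X :: "real^'n^'n"
  assumes ws: "well_structured H" and X: "pd_mat X"
  shows "\<exists>P. P \<in> H \<and> pd_mat P \<and> (\<forall>Q. Q \<in> H \<and> pd_mat Q \<longrightarrow> fobj X P \<le> fobj X Q)"
proof -
  obtain K where sK: "subspace K" and HK: "H = {A. psd_mat A} \<inter> K" and IK: "mat 1 \<in> K"
    using ws_props[OF ws] by blast
  have Xpsd: "psd_mat X" using pd_psd[OF X] .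
  define C where "C = {Q. Q \<in> H \<and> pd_mat Q}"
  have IC: "mat 1 \<in> C" unfolding C_def HK using IK pd_I pd_psd by blast
  define m where "m = Inf (fobj X ` C)"
  have bdd: "bdd_below (fobj X ` C)"
    by (rule bdd_belowI[of _ 0]) (auto simp: C_def fobj_nonneg[OF Xpsd])
  have mle: "m \<le> fobj X Q" if "Q \<in> C" for Q
    unfolding m_def using bdd that by (simp add: cInf_lower)
  have "\<exists>Q. Q \<in> C \<and> fobj X Q < m + inverse (real (Suc k))" for k
  proof -
    have "Inf (fobj X ` C) < m + inverse (real (Suc k))" unfolding m_def by simp
    then obtain v where "v \<in> fobj X ` C" "v < m + inverse (real (Suc k))"
      using cInf_lessD[of "fobj X ` C"] IC by blast
    then show ?thesis by auto
  qed
  then obtain Qs where Qs: "\<And>k. Qs k \<in> C" "\<And>k. fobj X (Qs k) < m + inverse (real (Suc k))"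
    by metis
  define c where "c = fobj X (mat 1) + 1"
  have Qc: "fobj X (Qs k) < c" for k
  proof -
    have "inverse (real (Suc k)) \<le> 1" by (simp add: inverse_le_1_iff)
    then show ?thesis using Qs(2)[of k] mle[OF IC] unfolding c_def by linarith
  qed
  have Qpd: "pd_mat (Qs k)" for k using Qs(1) unfolding C_def by auto
  have Qpsd: "psd_mat (Qs k)" for k using pd_psd[OF Qpd] .
  have Qfrob0: "0 \<le> frob_inner X (matrix_inv (Qs k))" for k
    using psd_frob[OF Xpsd pd_psd[OF pd_inv(4)[OF Qpd]]] .
  have Qtr: "trace (Qs k) \<le> c" for k using Qc[of k] Qfrob0[of k] unfolding fobj_def by linarith
  have Qfr: "frob_inner X (matrix_inv (Qs k)) \<le> c" for k
    using Qc[of k] psd_trace_nonneg[OF Qpsd] unfolding fobj_def by smt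
  have cpos: "c > 0" unfolding c_def using fobj_nonneg[OF Xpsd pd_I] by simp
  have "bounded (range Qs)"
    unfolding bounded_iff
  proof (intro exI ballI)
    fix A assume "A \<in> range Qs"
    then obtain k where k: "A = Qs k" by auto
    have "\<bar>A$i$j\<bar> \<le> c" for i j using psd_entry_bound[OF Qpsd[of k], of i j] Qtr[of k] k by simp
    then show "norm A \<le> real CARD('n) * (real CARD('n) * c)" by (rule norm_entry_bound)
  qed
  then obtain l r where r: "strict_mono r" and lim: "(Qs \<circ> r) \<longlonglongrightarrow> l"
    using bounded_imp_convergent_subsequence by blast
  define S where "S = Qs \<circ> r"
  have limS: "S \<longlonglongrightarrow> l" using lim S_def by simp
  have SK: "S k \<in> K" for k using Qs(1) unfolding S_def C_def HK by auto
  have lK: "l \<in> K" using closed_sequentially[OF closed_subspace[OF sK] SK limS] .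
  have ent: "\<And>i j. (\<lambda>k. S k $ i $ j) \<longlonglongrightarrow> l $ i $ j"
    by (intro tendsto_vec_nth limS)
  have symS: "S k $ i $ j = S k $ j $ i" for k i j
    using Qpsd unfolding S_def psd_mat_def by (metis comp_apply sym_entry)
  have "l $ i $ j = l $ j $ i" for i j
  proof -
    have "(\<lambda>k. S k $ i $ j) \<longlonglongrightarrow> l $ j $ i" using ent[of j i] symS by simp
    then show ?thesis using ent[of i j] LIMSEQ_unique by blast
  qed
  then have lsym: "transpose l = l" by (simp add: vec_eq_iff transpose_entry)
  have lpos: "0 < x \<bullet> (l *v x)" if "x \<noteq> 0" for x
  proof -
    have xX: "0 < x \<bullet> (X *v x)" using X that unfolding pd_mat_def by auto
    have "(x \<bullet> (X *v x)) / c \<le> x \<bullet> (S k *v x)" for k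
    proof -
      have qp: "0 < x \<bullet> (S k *v x)" using Qpd that unfolding S_def pd_mat_def by auto
      have "(x \<bullet> (X *v x)) / (x \<bullet> (S k *v x)) \<le> c"
        using quad_lower[OF Qpd[of "r k"] Xpsd that] Qfr[of "r k"] unfolding S_def by simp
      then show ?thesis using qp cpos by (simp add: field_simps)
    qed
    then have "(x \<bullet> (X *v x)) / c \<le> x \<bullet> (l *v x)"
      using LIMSEQ_le_const[OF quad_tendsto[OF limS]] by blast
    moreover have "0 < (x \<bullet> (X *v x)) / c" using xX cpos by simp
    ultimately show ?thesis by linarith
  qed
  have lpd: "pd_mat l" unfolding pd_mat_def using lsym lpos by auto
  have lH: "l \<in> H" unfolding HK using lK pd_psd[OF lpd] by auto
  define W where "W = matrix_inv l"
  have Wsym: "transpose W = W" unfolding W_def using pd_inv(3)[OF lpd] .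
  have phil: "frob_inner X (2 *\<^sub>R W - W ** l ** W) + trace l \<le> m"
  proof (rule LIMSEQ_le)
    show "(\<lambda>k. frob_inner X (2 *\<^sub>R W - W ** S k ** W) + trace (S k)) \<longlonglongrightarrow>
         frob_inner X (2 *\<^sub>R W - W ** l ** W) + trace l" by (rule phi_tendsto[OF limS])
    show "(\<lambda>k. m + inverse (real (Suc k))) \<longlonglongrightarrow> m"
      using tendsto_add[OF tendsto_const LIMSEQ_inverse_real_of_nat, of m] by simp
    show "\<exists>N. \<forall>k\<ge>N. frob_inner X (2 *\<^sub>R W - W ** S k ** W) + trace (S k) \<le> m + inverse (real (Suc k))"
    proof (intro exI allI impI)
      fix k :: nat
      have "frob_inner X (2 *\<^sub>R W - W ** S k ** W) + trace (S k) \<le> fobj X (S k)"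
        unfolding fobj_def using W_bound[OF _ Xpsd Wsym] Qpd unfolding S_def by simp
      also have "\<dots> < m + inverse (real (Suc (r k)))" unfolding S_def using Qs(2) by simp
      also have "\<dots> \<le> m + inverse (real (Suc k))"
        using seq_suble[OF r, of k] by (simp add: field_simps)
      finally show "frob_inner X (2 *\<^sub>R W - W ** S k ** W) + trace (S k) \<le> m + inverse (real (Suc k))"
        by simp
    qed
  qed
  have "fobj X l = frob_inner X (2 *\<^sub>R W - W ** l ** W) + trace l"
    unfolding fobj_def W_def using W_exact[OF lpd] by simp
  then have "\<forall>Q. Q \<in> H \<and> pd_mat Q \<longrightarrow> fobj X l \<le> fobj X Q"
    using phil mle unfolding C_def by fastforce
  then show ?thesis using lH lpd by blast
qed



lemma inv_unique:
  assumes A: "pd_mat (A::real^'n^'n)" and AB: "A ** B = mat 1"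
  shows "matrix_inv A = B"
  by (metis AB matrix_mul_assoc matrix_mul_lid matrix_mul_rid pd_inv(2)[OF A])

lemma pd_scale: "pd_mat (A::real^'n^'n) \<Longrightarrow> t > 0 \<Longrightarrow> pd_mat (t *\<^sub>R A)"
  unfolding pd_mat_def by (simp add: transpose_scalar scaleR_mv)
lemma psd_scale: "psd_mat (A::real^'n^'n) \<Longrightarrow> t \<ge> 0 \<Longrightarrow> psd_mat (t *\<^sub>R A)"
  unfolding psd_mat_def by (simp add: transpose_scalar scaleR_mv)
lemma transpose_add: "transpose ((A::real^'n^'n) + B) = transpose A + transpose B"
  by (simp add: vec_eq_iff transpose_entry)
lemma pd_add: "pd_mat (A::real^'n^'n) \<Longrightarrow> pd_mat B \<Longrightarrow> pd_mat (A + B)"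
  unfolding pd_mat_def by (simp add: transpose_add matrix_vector_mult_add_rdistrib inner_add_right add_pos_pos)
lemma pd_comb: "pd_mat (A::real^'n^'n) \<Longrightarrow> pd_mat B \<Longrightarrow> u \<ge> 0 \<Longrightarrow> v \<ge> 0 \<Longrightarrow> u + v = 1
   \<Longrightarrow> pd_mat (u *\<^sub>R A + v *\<^sub>R B)"
proof -
  assume A: "pd_mat A" and B: "pd_mat B" and uv: "u \<ge> 0" "v \<ge> 0" "u + v = 1"
  show ?thesis
  proof (cases "u = 0")
    case True then show ?thesis using B uv by simp
  next
    case False
    show ?thesis
    proof (cases "v = 0")
      case True then show ?thesis using A uv by simp
    next
      case False
      then show ?thesis using \<open>u \<noteq> 0\<close> uv by (intro pd_add pd_scale A B) auto
    qed
  qed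
qed

lemma H_scale:
  assumes ws: "well_structured H" and P: "P \<in> H" "pd_mat P" and t: "t > 0"
  shows "t *\<^sub>R P \<in> H" "pd_mat (t *\<^sub>R P)"
proof -
  obtain K where HK: "H = {A. psd_mat A} \<inter> K" and sc: "\<And>c A. A \<in> K \<Longrightarrow> c *\<^sub>R A \<in> K"
    using ws_props[OF ws] by blast
  show "pd_mat (t *\<^sub>R P)" using pd_scale P t by blast
  then show "t *\<^sub>R P \<in> H" using P sc pd_psd unfolding HK by blast
qed

lemma H_mid:
  assumes ws: "well_structured H" and P: "P1 \<in> H" "pd_mat P1" "P2 \<in> H" "pd_mat P2"
  shows "(1/2) *\<^sub>R (P1 + P2) \<in> H" "pd_mat ((1/2) *\<^sub>R (P1 + P2))"
proof -
  obtain K where HK: "H = {A. psd_mat A} \<inter> K" and sc: "\<And>c A. A \<in> K \<Longrightarrow> c *\<^sub>R A \<in> K"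
     and ad: "\<And>A B. A \<in> K \<Longrightarrow> B \<in> K \<Longrightarrow> A + B \<in> K"
    using ws_props[OF ws] by blast
  show "pd_mat ((1/2) *\<^sub>R (P1 + P2))" using P by (intro pd_scale pd_add) auto
  then show "(1/2) *\<^sub>R (P1 + P2) \<in> H" using P sc ad pd_psd unfolding HK by blast
qed

lemma sandwich_quad:
  assumes R: "transpose R = (R::real^'n^'n)"
  shows "x \<bullet> ((R ** Q ** R) *v x) = (R *v x) \<bullet> (Q *v (R *v x))"
proof -
  have "x \<bullet> ((R ** Q ** R) *v x) = x \<bullet> (R *v (Q *v (R *v x)))"
    by (metis matrix_vector_mul_assoc)
  also have "\<dots> = (Q *v (R *v x)) \<bullet> (R *v x)"
    using sym_inner[OF R, of x "Q *v (R *v x)"] by (simp add: inner_commute)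
  finally show ?thesis by (simp add: inner_commute)
qed

lemma gap_zero:
  assumes P: "pd_mat (P::real^'n^'n)" and X: "pd_mat X" and W: "transpose W = W"
    and g: "frob_inner X ((matrix_inv P - W) ** P ** (matrix_inv P - W)) = 0"
  shows "matrix_inv P = W"
proof -
  let ?R = "matrix_inv P - W"
  have Rs: "transpose ?R = ?R"
    using pd_inv(3)[OF P] W by (simp add: vec_eq_iff transpose_entry)
  have "psd_mat (?R ** P ** ?R)" using sandwich_psd[OF Rs pd_psd[OF P]] .
  then have z: "?R ** P ** ?R = 0" using pd_frob_zero[OF X _ g] by blast
  have "?R *v x = 0 *v x" for x
  proof -
    have "(?R *v x) \<bullet> (P *v (?R *v x)) = 0" using sandwich_quad[OF Rs, of x P] z by simp
    then show ?thesis using P unfolding pd_mat_def by force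
  qed
  then have "?R = 0" using matrix_eq by blast
  then show ?thesis by simp
qed

definition is_min where
  "is_min H X P \<longleftrightarrow> P \<in> H \<and> pd_mat P \<and> (\<forall>Q. Q \<in> H \<and> pd_mat Q \<longrightarrow> fobj X P \<le> fobj X Q)"

lemma uniqueness:
  assumes ws: "well_structured H" and X: "pd_mat X"
    and m1: "is_min H X P1" and m2: "is_min H X P2"
  shows "P1 = P2"
proof -
  have P1: "P1 \<in> H" "pd_mat P1" and P2: "P2 \<in> H" "pd_mat P2"
    using m1 m2 unfolding is_min_def by auto
  define Q where "Q = (1/2) *\<^sub>R (P1 + P2)"
  have QH: "Q \<in> H" "pd_mat Q" unfolding Q_def using H_mid[OF ws P1 P2] by auto
  define W where "W = matrix_inv Q"
  have Ws: "transpose W = W" unfolding W_def using pd_inv(3)[OF QH(2)] .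
  define g1 where "g1 = frob_inner X ((matrix_inv P1 - W) ** P1 ** (matrix_inv P1 - W))"
  define g2 where "g2 = frob_inner X ((matrix_inv P2 - W) ** P2 ** (matrix_inv P2 - W))"
  have Rs: "transpose (matrix_inv Pk - W) = matrix_inv Pk - W" if "pd_mat Pk" for Pk
    using pd_inv(3)[OF that] Ws by (simp add: vec_eq_iff transpose_entry)
  have g1p: "0 \<le> g1" unfolding g1_def
    using psd_frob[OF pd_psd[OF X] sandwich_psd[OF Rs[OF P1(2)] pd_psd[OF P1(2)]]] .
  have g2p: "0 \<le> g2" unfolding g2_def
    using psd_frob[OF pd_psd[OF X] sandwich_psd[OF Rs[OF P2(2)] pd_psd[OF P2(2)]]] .
  have fQ: "fobj X Q = frob_inner X (2 *\<^sub>R W - W ** Q ** W) + trace Q"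
    unfolding fobj_def W_def using W_exact[OF QH(2)] by simp
  have WQW: "W ** Q ** W = (1/2) *\<^sub>R (W ** P1 ** W) + (1/2) *\<^sub>R (W ** P2 ** W)"
    unfolding Q_def by (simp add: mm_scale_l mm_scale_r matrix_add_ldistrib mm_add_r scaleR_right_distrib)
  have "frob_inner X (2 *\<^sub>R W - W ** Q ** W) =
        (1/2) * frob_inner X (2 *\<^sub>R W - W ** P1 ** W) + (1/2) * frob_inner X (2 *\<^sub>R W - W ** P2 ** W)"
    unfolding WQW frob_diff2 frob_add2 frob_scale2 by simp argo
  also have "\<dots> = (1/2) * (frob_inner X (matrix_inv P1) - g1) + (1/2) * (frob_inner X (matrix_inv P2) - g2)"
    unfolding g1_def g2_def W_gap[OF P1(2)] W_gap[OF P2(2)] by simp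
  finally have eq: "frob_inner X (2 *\<^sub>R W - W ** Q ** W) = (1/2) * (frob_inner X (matrix_inv P1) - g1) + (1/2) * (frob_inner X (matrix_inv P2) - g2)" .
  have trQ: "trace Q = (1/2) * (trace P1 + trace P2)" unfolding Q_def trace_scale trace_add by simp
  have "fobj X Q = (1/2) * (fobj X P1 + fobj X P2) - (1/2) * (g1 + g2)"
    unfolding fQ eq trQ unfolding fobj_def by argo
  moreover have "fobj X P1 \<le> fobj X Q" "fobj X P2 \<le> fobj X Q"
    using m1 m2 QH unfolding is_min_def by auto
  ultimately have "g1 = 0 \<and> g2 = 0" using g1p g2p by argo
  then have "g1 = 0" "g2 = 0" by auto
  then have "matrix_inv P1 = W" "matrix_inv P2 = W"
    using gap_zero[OF P1(2) X Ws] gap_zero[OF P2(2) X Ws] unfolding g1_def g2_def by auto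
  then have "matrix_inv P1 = matrix_inv P2" by simp
  then show "P1 = P2"
    by (metis matrix_mul_assoc matrix_mul_lid matrix_mul_rid pd_inv(1)[OF P1(2)] pd_inv(2)[OF P2(2)])
qed

lemma pd_trace_pos: "pd_mat (P::real^'n^'n) \<Longrightarrow> 0 < trace P"
  unfolding trace_def
proof (rule sum_pos)
  fix i assume "pd_mat P"
  then show "0 < P$i$i" using axis_bil[of i P i] unfolding pd_mat_def
    by (metis axis_eq_0_iff zero_neq_one)
qed auto

lemma min_trace:
  assumes ws: "well_structured H" and X: "pd_mat X" and m: "is_min H X P"
  shows "fobj X P = 2 * trace P"
proof -
  have P: "P \<in> H" "pd_mat P" using m unfolding is_min_def by auto
  define a where "a = frob_inner X (matrix_inv P)"
  define b where "b = trace P"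
  have a0: "0 \<le> a" unfolding a_def using psd_frob[OF pd_psd[OF X] pd_psd[OF pd_inv(4)[OF P(2)]]] .
  have b0: "0 < b" unfolding b_def using pd_trace_pos[OF P(2)] .
  define t where "t = (a + b) / (2 * b)"
  have t0: "t > 0" unfolding t_def using a0 b0 by simp
  have inv: "matrix_inv (t *\<^sub>R P) = (1/t) *\<^sub>R matrix_inv P"
    using inv_unique[OF pd_scale[OF P(2) t0]] pd_inv(1)[OF P(2)] t0
    by (simp add: mm_scale_l mm_scale_r)
  have "fobj X P \<le> fobj X (t *\<^sub>R P)"
    using m H_scale[OF ws P t0] unfolding is_min_def by auto
  then have "a + b \<le> a / t + t * b"
    unfolding fobj_def inv frob_scale2 trace_scale a_def b_def by simp
  also have "a / t = 2 * a * b / (a + b)"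
    unfolding t_def using a0 b0 by (simp add: field_simps)
  also have "t * b = (a + b) / 2"
    unfolding t_def using a0 b0 by (simp add: field_simps)
  finally have fin: "a + b \<le> 2 * a * b / (a + b) + (a + b) / 2" .
  have gen: "\<And>z. a + b \<le> z + (a + b) / 2 \<Longrightarrow> (a + b) / 2 \<le> z" by argo
  have "(a + b) / 2 \<le> 2 * a * b / (a + b)" by (rule gen[OF fin])
  then have "(a + b) * (a + b) \<le> 4 * a * b"
    using a0 b0 by (simp add: field_simps)
  then have "(a - b)^2 \<le> 0" by (simp add: power2_eq_square algebra_simps)
  then have "a = b" by simp
  then show ?thesis unfolding fobj_def a_def b_def by simp
qed

lemma precond_spec:
  assumes ws: "well_structured H" and X: "pd_mat X"
  shows "is_min H X (precond H X)"
proof -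
  have ex: "\<exists>!P. is_min H X P"
    using existence[OF ws X] uniqueness[OF ws X] unfolding is_min_def by blast
  have "precond H X = (THE P. is_min H X P)"
    unfolding precond_def is_min_def fobj_def by simp
  then show ?thesis using theI'[OF ex] by simp
qed

theorem lemmaA6:
  fixes H :: "(real^'n^'n) set"
  assumes "well_structured H"
  shows "concave_on {X. pd_mat X} (\<lambda>X. trace (precond H X))"
  unfolding concave_on_iff
proof (intro conjI ballI allI impI)
  show "convex {X :: real^'n^'n. pd_mat X}"
    unfolding convex_def using pd_comb by blast
next
  fix X Y :: "real^'n^'n" and u v :: real
  assume X: "X \<in> {X. pd_mat X}" and Y: "Y \<in> {X. pd_mat X}" and u: "0 \<le> u" and v: "0 \<le> v" and uv: "u + v = 1"
  have Xp: "pd_mat X" and Yp: "pd_mat Y" using X Y by auto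
  have v_eq: "v = 1 - u" using uv by simp
  define Z where "Z = u *\<^sub>R X + v *\<^sub>R Y"
  have Zp: "pd_mat Z" unfolding Z_def using pd_comb[OF Xp Yp u v uv] .
  define P where "P = precond H Z"
  have mZ: "is_min H Z P" unfolding P_def using precond_spec[OF assms Zp] .
  have mX: "is_min H X (precond H X)" using precond_spec[OF assms Xp] .
  have mY: "is_min H Y (precond H Y)" using precond_spec[OF assms Yp] .
  have PH: "P \<in> H" "pd_mat P" using mZ unfolding is_min_def by auto
  have "2 * trace P = fobj Z P" using min_trace[OF assms Zp mZ] by simp
  also have "\<dots> = u * fobj X P + v * fobj Y P"
    unfolding fobj_def Z_def frob_add1 frob_scale1
    using uv by (simp add: algebra_simps v_eq)
  also have "\<dots> \<ge> u * fobj X (precond H X) + v * fobj Y (precond H Y)"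
    using mX mY PH u v unfolding is_min_def by (intro add_mono mult_left_mono) auto
  finally have "u * fobj X (precond H X) + v * fobj Y (precond H Y) \<le> 2 * trace P" .
  then show "u * trace (precond H X) + v * trace (precond H Y) \<le> trace (precond H (u *\<^sub>R X + v *\<^sub>R Y))"
    unfolding min_trace[OF assms Xp mX] min_trace[OF assms Yp mY] P_def Z_def by simp
qed

end
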